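(* For any $S_1,S,T_1,T\in\mathfrak S_1(\mathbb T)$ with $S_1\le S$ and $T_1\le T$, $$d(S-S_1,T-T_1)\le d(S_1,T_1)+d(S,T).$$
   Context: A rigged subset $S$ of a set $X$ assigns to each $x$ a multiplicity $\mathrm{mult}(x;S)\in\{0,1,\dots,\infty\}$; $S\le T$ means $\mathrm{mult}(x;S)\le\mathrm{mult}(x;T)$ for all $x$; $S\pm T$ are defined by adding/subtracting multiplicities (difference when $T\le S$). An enumeration is a sequence in which each $x$ appears $\mathrm{mult}(x;S)$ times. $\mathfrak S_\infty(\mathbb T)$ consists of countable rigged subsets of the unit circle $\mathbb T$ (arc-length metric) in which $1$ has multiplicity $\infty$ and with no other accumulation point (counting multiplicity); $d(S,T)=\inf\sum_j\mathrm{dist}(s_j,t_j)$ over enumerations of $S,T$; $\mathfrak S_1(\mathbb T)=\{S: d(S,\mathbf 1)<\infty\}$, $\mathbf 1$ being $1$ with infinite multiplicity. The point $1$ is always regarded as having infinite multiplicity (so differences are again in $\mathfrak S_1(\mathbb T)$). *)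

theory Defs
  imports "HOL-Analysis.Analysis"
begin

text \<open>A rigged subset of the complex plane is a multiplicity function into enat.\<close>
type_synonym rigged = "complex \<Rightarrow> enat"

definition arcdist :: "complex \<Rightarrow> complex \<Rightarrow> real" where
  "arcdist z w = \<bar>Arg (z * cnj w)\<bar>"

definition occ :: "(nat \<Rightarrow> complex) \<Rightarrow> complex \<Rightarrow> enat" where
  "occ s x = (if finite {j. s j = x} then enat (card {j. s j = x}) else \<infinity>)"

definition is_enum :: "rigged \<Rightarrow> (nat \<Rightarrow> complex) \<Rightarrow> bool" where
  "is_enum S s \<longleftrightarrow> (\<forall>x. occ s x = S x)"

definition S_inf :: "rigged \<Rightarrow> bool" where
  "S_inf S \<longleftrightarrow>
     (\<forall>x. S x \<noteq> 0 \<longrightarrow> x \<in> sphere 0 1) \<and>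
     countable {x. S x \<noteq> 0} \<and>
     S 1 = \<infinity> \<and>
     (\<forall>x. x \<noteq> 1 \<longrightarrow>
        (\<exists>e>0. finite {y \<in> ball x e. S y \<noteq> 0} \<and> (\<forall>y\<in>ball x e. S y \<noteq> \<infinity>)))"

definition rdist :: "rigged \<Rightarrow> rigged \<Rightarrow> ennreal" where
  "rdist S T = (INF st \<in> {(s, t). is_enum S s \<and> is_enum T t}.
                  (\<Sum>j. ennreal (arcdist (fst st j) (snd st j))))"

definition one_rigged :: rigged where
  "one_rigged = (\<lambda>x. if x = 1 then \<infinity> else 0)"

definition S_one :: "rigged \<Rightarrow> bool" where
  "S_one S \<longleftrightarrow> S_inf S \<and> rdist S one_rigged < \<infinity>"

text \<open>Difference (for T \<le> S), with 1 always of infinite multiplicity.\<close>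
definition rdiff :: "rigged \<Rightarrow> rigged \<Rightarrow> rigged" where
  "rdiff S T = (\<lambda>x. if x = 1 then \<infinity> else S x - T x)"

end

theory Submission
  imports Defs
begin

lemma Arg_mult_le:
  fixes a b :: complex
  assumes "a \<noteq> 0" "b \<noteq> 0"
  shows "\<bar>Arg (a*b)\<bar> \<le> \<bar>Arg a\<bar> + \<bar>Arg b\<bar>"
proof -
  define th where "th = Arg a + Arg b"
  have ab: "a*b = of_real (norm a * norm b) * exp (\<i> * th)"
  proof -
    have "a*b = (of_real(norm a) * exp(\<i>*Arg a)) * (of_real(norm b) * exp(\<i>*Arg b))"
      by (rule arg_cong2[where f="(*)", OF Arg_eq[OF assms(1)] Arg_eq[OF assms(2)]])
    also have "\<dots> = of_real (norm a * norm b) * (exp(\<i>*Arg a) * exp(\<i>*Arg b))"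
      by (simp add: mult_ac)
    also have "\<dots> = of_real (norm a * norm b) * exp (\<i> * th)"
      by (simp add: th_def distrib_left exp_add)
    finally show ?thesis .
  qed
  have p: "0 < norm a * norm b" using assms by simp
  have r1: "-pi < Arg a" "Arg a \<le> pi" "-pi < Arg b" "Arg b \<le> pi"
    using mpi_less_Arg Arg_le_pi by auto
  have "\<i> * (2 * complex_of_real pi) = 2 * of_real pi * \<i>" by simp
  hence e2: "exp (\<i> * (2 * complex_of_real pi)) = 1"
    using exp_two_pi_i by (simp only:)
  have em: "exp (\<i> * of_real (th - 2*pi)) = exp (\<i> * of_real th)"
    by (simp add: right_diff_distrib exp_diff e2)
  have ep: "exp (\<i> * of_real (th + 2*pi)) = exp (\<i> * of_real th)"
    by (simp add: distrib_left exp_add e2)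
  have r1: "-pi < Arg a" "Arg a \<le> pi" "-pi < Arg b" "Arg b \<le> pi"
    using mpi_less_Arg Arg_le_pi by auto
  consider "th > pi" | "th \<le> -pi" | "-pi < th" "th \<le> pi" by linarith
  then show ?thesis
  proof cases
    case 1
    have "Arg (a*b) = th - 2*pi"
      by (rule Arg_unique[OF _ p]) (use ab em 1 r1 th_def in auto)
    then show ?thesis using 1 r1 th_def by auto
  next
    case 2
    have "Arg (a*b) = th + 2*pi"
      by (rule Arg_unique[OF _ p]) (use ab ep 2 r1 th_def in auto)
    then show ?thesis using 2 r1 th_def by auto
  next
    case 3
    have "Arg (a*b) = th"
      by (rule Arg_unique[OF _ p]) (use ab 3 in auto)
    then show ?thesis using th_def by auto
  qed
qed

lemma abs_Arg_cnj: "\<bar>Arg (cnj z)\<bar> = \<bar>Arg z\<bar>"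
  by (simp add: Arg_cnj)
lemma arcdist_sym: "arcdist a b = arcdist b a"
proof -
  have "b * cnj a = cnj (a * cnj b)" by simp
  thus ?thesis unfolding arcdist_def by (simp only: abs_Arg_cnj)
qed
lemma arcdist_self: "arcdist a a = 0"
proof -
  have "arcdist a a = \<bar>Arg (of_real ((norm a)^2))\<bar>" unfolding arcdist_def
    by (simp only: complex_norm_square)
  moreover have "Arg (of_real ((norm a)^2)) = 0" by (simp only: Arg_of_real) simp
  ultimately show ?thesis by simp
qed
lemma arcdist_tri:
  assumes "a \<noteq> 0" "b \<noteq> 0" "c \<noteq> 0"
  shows "arcdist a c \<le> arcdist a b + arcdist b c"
proof -
  have "a * cnj c * (b * cnj b) = (a * cnj b) * (b * cnj c)"
    by (simp add: mult_ac)
  hence h: "a * cnj c * of_real ((norm b)^2) = (a * cnj b) * (b * cnj c)"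
    by (simp only: complex_norm_square)
  have r: "0 < (norm b)^2" using assms by simp
  have "Arg (a * cnj c) = Arg (a * cnj c * of_real ((norm b)^2))"
    by (rule Arg_times_of_real2[OF r, symmetric])
  also have "\<dots> = Arg ((a * cnj b) * (b * cnj c))" by (simp only: h)
  finally have "Arg (a * cnj c) = Arg ((a * cnj b) * (b * cnj c))" .
  moreover have "\<bar>Arg ((a * cnj b) * (b * cnj c))\<bar> \<le> \<bar>Arg (a * cnj b)\<bar> + \<bar>Arg (b * cnj c)\<bar>"
    by (rule Arg_mult_le) (use assms in auto)
  ultimately show ?thesis unfolding arcdist_def by simp
qed

definition occD :: "nat set \<Rightarrow> (nat \<Rightarrow> complex) \<Rightarrow> complex \<Rightarrow> enat" where
  "occD D s x = (if finite {j\<in>D. s j = x} then enat (card {j\<in>D. s j = x}) else \<infinity>)"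

lemma occD_UNIV: "occD UNIV s = occ s"
  by (simp add: occD_def occ_def fun_eq_iff)

lemma occ_ne0: "occ s (s j) \<noteq> 0"
proof (cases "finite {i. s i = s j}")
  case True
  have "j \<in> {i. s i = s j}" by simp
  hence "card {i. s i = s j} \<noteq> 0" using True card_0_eq by blast
  thus ?thesis unfolding occ_def using True by (simp add: zero_enat_def)
next
  case False
  thus ?thesis unfolding occ_def by simp
qed

lemma occ_ne0_ex: "occ s x \<noteq> 0 \<Longrightarrow> \<exists>i. s i = x"
proof (rule ccontr)
  assume "occ s x \<noteq> 0" "\<not> (\<exists>i. s i = x)"
  then have "{i. s i = x} = {}" by blast
  with \<open>occ s x \<noteq> 0\<close> show False unfolding occ_def by (simp add: zero_enat_def)
qed

lemma occ_inf_iff: "occ s x = \<infinity> \<longleftrightarrow> infinite {j. s j = x}"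
  unfolding occ_def by auto

lemma enum_replace:
  assumes e: "is_enum S s" and si: "s i = x" and S1: "S 1 = \<infinity>"
  shows "is_enum (S(x := S x - 1)) (s(i := 1))"
proof (cases "x = 1")
  case True
  then have "s(i := 1) = s" using si by auto
  moreover have "S(x := S x - 1) = S" using True S1 by (auto simp: fun_eq_iff)
  ultimately show ?thesis using e by simp
next
  case False
  have inf1: "infinite {j. s j = 1}" using e S1 unfolding is_enum_def by (metis occ_inf_iff)
  show ?thesis unfolding is_enum_def
  proof
    fix z
    show "occ (s(i := 1)) z = (S(x := S x - 1)) z"
    proof (cases "z = x")
      case True
      have eq: "{j. (s(i := 1)) j = z} = {j. s j = z} - {i}" using True False si by auto
      have iin: "i \<in> {j. s j = z}" using si True by simp
      show ?thesis
      proof (cases "finite {j. s j = z}")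
        case True
        have "occ (s(i := 1)) z = enat (card {j. s j = z} - 1)"
          unfolding occ_def eq using True iin by simp
        also have "\<dots> = occ s z - 1" unfolding occ_def using True by (simp add: one_enat_def)
        finally show ?thesis using e \<open>z = x\<close> unfolding is_enum_def by simp
      next
        case F: False
        have "occ (s(i := 1)) z = \<infinity>" unfolding occ_def eq using F by simp
        moreover have "occ s z = \<infinity>" unfolding occ_def using F by simp
        ultimately show ?thesis using e \<open>z = x\<close> unfolding is_enum_def by simp
      qed
    next
      case zx: False
      show ?thesis
      proof (cases "z = 1")
        case True
        have "{j. s j = 1} \<subseteq> {j. (s(i := 1)) j = z}" using True si False by auto
        hence "infinite {j. (s(i := 1)) j = z}" using inf1 finite_subset by blast
        hence "occ (s(i := 1)) z = \<infinity>" unfolding occ_def by simp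
        thus ?thesis using zx True S1 by simp
      next
        case F: False
        have "{j. (s(i := 1)) j = z} = {j. s j = z}" using F zx si by auto
        hence "occ (s(i := 1)) z = occ s z" unfolding occ_def by simp
        thus ?thesis using e zx unfolding is_enum_def by simp
      qed
    qed
  qed
qed

lemma enum_bij:
  assumes e: "is_enum S s" and b: "bij p"
  shows "is_enum S (s \<circ> p)"
  unfolding is_enum_def
proof
  fix z
  have "{j. (s \<circ> p) j = z} = p -` {j. s j = z}" by auto
  also have "\<dots> = inv p ` {j. s j = z}" by (rule bij_vimage_eq_inv_image[OF b])
  finally have eq: "{j. (s \<circ> p) j = z} = inv p ` {j. s j = z}" .
  have ij: "inj_on (inv p) A" for A
    using bij_is_inj[OF bij_imp_bij_inv[OF b]] inj_on_subset by blast
  have "occ (s \<circ> p) z = occ s z"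
    unfolding occ_def eq using ij by (simp add: card_image finite_image_iff)
  thus "occ (s \<circ> p) z = S z" using e unfolding is_enum_def by simp
qed

definition cost :: "(nat \<Rightarrow> complex) \<Rightarrow> (nat \<Rightarrow> complex) \<Rightarrow> ennreal" where
  "cost s t = (\<Sum>j. ennreal (arcdist (s j) (t j)))"

lemma cost_sym: "cost s t = cost t s"
  unfolding cost_def by (simp add: arcdist_sym)

lemma arcdist_nonneg: "0 \<le> arcdist a b"
  unfolding arcdist_def by simp

lemma suminf_single_ennreal: "(\<Sum>j. (if j = i then a else 0::ennreal)) = a"
  using sums_unique[OF sums_single[of i "\<lambda>_. a"]] by simp

lemma suminf_le_ennreal: "(\<And>j. f j \<le> (g j::ennreal)) \<Longrightarrow> suminf f \<le> suminf g"
  by (rule suminf_le) auto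

lemma remove_pair:
  assumes es: "is_enum S s" and et: "is_enum T t" and S1: "S 1 = \<infinity>" and T1: "T 1 = \<infinity>"
    and si: "s i = x" and tk: "t k = y"
    and sn: "\<forall>j. s j \<noteq> 0" and tn: "\<forall>j. t j \<noteq> 0"
  shows "\<exists>s' t'. is_enum (S(x := S x - 1)) s' \<and> is_enum (T(y := T y - 1)) t' \<and>
     (\<forall>j. s' j \<noteq> 0) \<and> (\<forall>j. t' j \<noteq> 0) \<and> cost s' t' \<le> cost s t + ennreal (arcdist x y)"
proof (cases "i = k")
  case True
  define s' where "s' = s(i := 1)"
  define t' where "t' = t(i := 1)"
  have "is_enum (S(x := S x - 1)) s'" unfolding s'_def by (rule enum_replace[OF es si S1])
  moreover have "is_enum (T(y := T y - 1)) t'" unfolding t'_def True by (rule enum_replace[OF et tk T1])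
  moreover have "\<forall>j. s' j \<noteq> 0" "\<forall>j. t' j \<noteq> 0" using sn tn by (auto simp: s'_def t'_def)
  moreover have "cost s' t' \<le> cost s t"
    unfolding cost_def
  proof (rule suminf_le_ennreal)
    fix j show "ennreal (arcdist (s' j) (t' j)) \<le> ennreal (arcdist (s j) (t j))"
      by (cases "j = i") (auto simp: s'_def t'_def arcdist_self arcdist_nonneg)
  qed
  ultimately show ?thesis by (intro exI[of _ s'] exI[of _ t']) (auto intro: order_trans add_increasing2)
next
  case False
  define p where "p = (\<lambda>j. if j = i then k else if j = k then i else j)"
  have pp: "p (p j) = j" for j by (simp add: p_def)
  have bp: "bij p" by (rule o_bij[of p]) (auto simp: fun_eq_iff pp)
  define t2 where "t2 = t \<circ> p"
  have et2: "is_enum T t2" unfolding t2_def by (rule enum_bij[OF et bp])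
  have t2i: "t2 i = y" using tk by (simp add: t2_def p_def)
  define s' where "s' = s(i := 1)"
  define t' where "t' = t2(i := 1)"
  have "is_enum (S(x := S x - 1)) s'" unfolding s'_def by (rule enum_replace[OF es si S1])
  moreover have "is_enum (T(y := T y - 1)) t'" unfolding t'_def by (rule enum_replace[OF et2 t2i T1])
  moreover have "\<forall>j. s' j \<noteq> 0" "\<forall>j. t' j \<noteq> 0" using sn tn by (auto simp: s'_def t'_def t2_def)
  moreover have "cost s' t' \<le> cost s t + ennreal (arcdist x y)"
  proof -
    define c where "c j = ennreal (arcdist (s j) (t j))" for j
    define D where "D = ennreal (arcdist x y)"
    define h where "h j = (if j = i then 0 else if j = k then c k + c i + D else c j)" for j
    have le: "ennreal (arcdist (s' j) (t' j)) \<le> h j" for j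
    proof -
      consider "j = i" | "j = k" | "j \<noteq> i" "j \<noteq> k" by blast
      then show ?thesis
      proof cases
        case 1 thus ?thesis by (simp add: s'_def t'_def h_def arcdist_self)
      next
        case 2
        have tr1: "arcdist (s k) (t i) \<le> arcdist (s k) y + arcdist y (t i)"
          by (rule arcdist_tri) (use sn tn tk in auto)
        have tr2: "arcdist y (t i) \<le> arcdist y x + arcdist x (t i)"
          by (rule arcdist_tri) (use sn tn tk si in auto)
        have "arcdist (s k) (t i) \<le> arcdist (s k) (t k) + arcdist (s i) (t i) + arcdist x y"
          using tr1 tr2 tk si arcdist_sym[of y x] by simp
        hence "ennreal (arcdist (s k) (t i)) \<le> ennreal (arcdist (s k) (t k) + arcdist (s i) (t i) + arcdist x y)"
          by (rule ennreal_leI)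
        also have "\<dots> = c k + c i + D" unfolding c_def D_def
          by (simp add: ennreal_plus arcdist_nonneg del: ennreal_plus_if)
        finally show ?thesis using 2 False
          by (simp add: s'_def t'_def h_def t2_def p_def)
      next
        case 3 thus ?thesis by (simp add: s'_def t'_def h_def t2_def p_def c_def)
      qed
    qed
    have "(\<Sum>j. h j + (if j = i then c i else 0)) = (\<Sum>j. h j) + (\<Sum>j. if j = i then c i else 0)"
      by (rule suminf_add[symmetric]) auto
    hence "(\<Sum>j. h j) + c i = (\<Sum>j. h j + (if j = i then c i else 0))"
      by (simp add: suminf_single_ennreal)
    also have "(\<lambda>j. h j + (if j = i then c i else 0)) = (\<lambda>j. c j + (if j = k then c i + D else 0))"
      using False by (auto simp: h_def fun_eq_iff ac_simps)
    also have "(\<Sum>j. c j + (if j = k then c i + D else 0)) = (\<Sum>j. c j) + (\<Sum>j. if j = k then c i + D else 0)"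
      by (rule suminf_add[symmetric]) auto
    also have "\<dots> = (\<Sum>j. c j) + (c i + D)" by (simp add: suminf_single_ennreal)
    finally have eq: "(\<Sum>j. h j) + c i = (\<Sum>j. c j) + D + c i" by (simp add: ac_simps)
    have "c i \<noteq> \<infinity>" by (simp add: c_def)
    hence "(\<Sum>j. h j) = (\<Sum>j. c j) + D" using eq
      by (metis add.commute ennreal_add_left_cancel)
    moreover have "cost s' t' \<le> (\<Sum>j. h j)" unfolding cost_def by (rule suminf_le_ennreal[OF le])
    ultimately show ?thesis by (simp add: cost_def c_def D_def)
  qed
  ultimately show ?thesis by blast
qed

lemma inj_match:
  assumes c: "\<forall>x. occD D r x \<le> occ u x"
  shows "\<exists>\<phi>. inj_on \<phi> D \<and> (\<forall>j\<in>D. u (\<phi> j) = r j)"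
proof -
  define F where "F x = {j\<in>D. r j = x}" for x
  define G where "G x = {m. u m = x}" for x
  have ex: "\<exists>f. inj_on f (F x) \<and> f ` F x \<subseteq> G x" for x
  proof (cases "finite (G x)")
    case False
    have "inj_on (enumerate (G x)) (F x)" using inj_enumerate[OF False] inj_on_subset by blast
    moreover have "enumerate (G x) ` F x \<subseteq> G x" using enumerate_in_set[OF False] by blast
    ultimately show ?thesis by blast
  next
    case True
    have "occ u x = enat (card (G x))" using True by (simp add: occ_def G_def)
    with c have le: "occD D r x \<le> enat (card (G x))" by metis
    hence fF: "finite (F x)" unfolding occD_def F_def by (auto split: if_splits)
    with le have "card (F x) \<le> card (G x)" unfolding occD_def F_def by simp
    thus ?thesis using card_le_inj[OF fF True] by blast
  qed
  then obtain g where g: "\<And>x. inj_on (g x) (F x) \<and> g x ` F x \<subseteq> G x" by metis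
  define \<phi> where "\<phi> j = g (r j) j" for j
  have u: "u (\<phi> j) = r j" if "j \<in> D" for j
  proof -
    have "j \<in> F (r j)" using that by (simp add: F_def)
    hence "g (r j) j \<in> G (r j)" using g by blast
    thus ?thesis by (simp add: \<phi>_def G_def)
  qed
  have "inj_on \<phi> D"
  proof (rule inj_onI)
    fix j j' assume j: "j \<in> D" "j' \<in> D" and e: "\<phi> j = \<phi> j'"
    have rr: "r j = r j'" using u[OF j(1)] u[OF j(2)] e by simp
    have "j \<in> F (r j)" "j' \<in> F (r j)" using j rr by (auto simp: F_def)
    moreover have "g (r j) j = g (r j) j'" using e rr by (simp add: \<phi>_def)
    ultimately show "j = j'" using g[of "r j"] by (meson inj_onD)
  qed
  thus ?thesis using u by blast
qed

lemma sum_image_indicator: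
  fixes w :: "nat \<Rightarrow> ennreal"
  assumes "inj_on \<phi> A"
  shows "(\<Sum>m. if m \<in> \<phi> ` A then w m else 0) = (\<integral>\<^sup>+j. w (\<phi> j) \<partial>count_space A)"
proof -
  have "(\<Sum>m. if m \<in> \<phi> ` A then w m else 0) = (\<integral>\<^sup>+m. w m * indicator (\<phi> ` A) m \<partial>count_space UNIV)"
    by (subst nn_integral_count_space_nat) (intro arg_cong[where f=suminf] ext, simp add: indicator_def)
  also have "\<dots> = (\<integral>\<^sup>+m. w m \<partial>count_space (\<phi> ` A))"
    by (rule nn_integral_count_space_indicator[symmetric]) simp
  also have "\<dots> = (\<integral>\<^sup>+j. w (\<phi> j) \<partial>count_space A)"
    by (rule nn_integral_bij_count_space[symmetric]) (use assms inj_on_imp_bij_betw in blast)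
  finally show ?thesis .
qed

lemma nn_integral_count_space_mono_set:
  fixes f :: "nat \<Rightarrow> ennreal"
  assumes "A \<subseteq> B"
  shows "(\<integral>\<^sup>+j. f j \<partial>count_space A) \<le> (\<integral>\<^sup>+j. f j \<partial>count_space B)"
proof -
  have "(\<integral>\<^sup>+j. f j \<partial>count_space A) = (\<integral>\<^sup>+j. f j * indicator A j \<partial>count_space UNIV)"
    by (rule nn_integral_count_space_indicator) simp
  also have "\<dots> \<le> (\<integral>\<^sup>+j. f j * indicator B j \<partial>count_space UNIV)"
    by (rule nn_integral_mono) (use assms in \<open>auto simp: indicator_def\<close>)
  also have "\<dots> = (\<integral>\<^sup>+j. f j \<partial>count_space B)"
    by (rule nn_integral_count_space_indicator[symmetric]) simp
  finally show ?thesis .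
qed

lemma remove_set:
  assumes eu: "is_enum U u" and U1: "U 1 = \<infinity>" and Ufin: "\<forall>x. x \<noteq> 1 \<longrightarrow> U x \<noteq> \<infinity>"
    and cnt: "\<forall>x. x \<noteq> 1 \<longrightarrow> occD D r x \<le> U x"
    and un: "\<forall>j. u j \<noteq> 0" and vn: "\<forall>j. v j \<noteq> 0"
  shows "\<exists>u'. is_enum (\<lambda>x. if x = 1 then \<infinity> else U x - occD D r x) u' \<and> (\<forall>j. u' j \<noteq> 0) \<and>
     cost u' v \<le> cost u v + (\<integral>\<^sup>+j. ennreal (arcdist (r j) 1) \<partial>count_space D)"
proof -
  define D' where "D' = {j\<in>D. r j \<noteq> 1}"
  have c': "\<forall>x. occD D' r x \<le> occ u x"
  proof
    fix x
    show "occD D' r x \<le> occ u x"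
    proof (cases "x = 1")
      case True
      have e: "{j\<in>D'. r j = x} = {}" using True by (auto simp: D'_def)
      show ?thesis unfolding occD_def e by (simp add: zero_enat_def[symmetric])
    next
      case False
      have "{j\<in>D'. r j = x} = {j\<in>D. r j = x}" using False by (auto simp: D'_def)
      hence "occD D' r x = occD D r x" by (simp add: occD_def)
      thus ?thesis using cnt False eu unfolding is_enum_def by simp
    qed
  qed
  obtain \<phi> where inj: "inj_on \<phi> D'" and ph: "\<forall>j\<in>D'. u (\<phi> j) = r j"
    using inj_match[OF c'] by blast
  define u' where "u' m = (if m \<in> \<phi> ` D' then 1 else u m)" for m
  have enum: "is_enum (\<lambda>x. if x = 1 then \<infinity> else U x - occD D r x) u'"
    unfolding is_enum_def
  proof
    fix x
    show "occ u' x = (if x = 1 then \<infinity> else U x - occD D r x)"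
    proof (cases "x = 1")
      case True
      have "infinite {m. u m = 1}" using eu U1 unfolding is_enum_def by (metis occ_inf_iff)
      moreover have "{m. u m = 1} \<subseteq> {m. u' m = x}" using True by (auto simp: u'_def)
      ultimately have "infinite {m. u' m = x}" using finite_subset by blast
      thus ?thesis using True by (simp add: occ_def)
    next
      case False
      define F where "F = {j\<in>D. r j = x}"
      define G where "G = {m. u m = x}"
      have oU: "occ u x = U x" using eu unfolding is_enum_def by simp
      have fG: "finite G" using Ufin False oU unfolding G_def occ_def by (auto split: if_splits)
      hence oG: "U x = enat (card G)" using oU unfolding occ_def G_def by simp
      have le: "occD D r x \<le> enat (card G)" using cnt False oG by metis
      hence fF: "finite F" unfolding occD_def F_def by (auto split: if_splits)
      with le have oF: "occD D r x = enat (card F)" unfolding occD_def F_def by simp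
      have FD: "F \<subseteq> D'" using False by (auto simp: F_def D'_def)
      have img: "\<phi> ` F \<subseteq> G" using ph FD by (auto simp: F_def G_def)
      have set: "{m. u' m = x} = G - \<phi> ` F"
      proof
        show "{m. u' m = x} \<subseteq> G - \<phi> ` F"
        proof
          fix m assume "m \<in> {m. u' m = x}"
          hence m: "u' m = x" by simp
          hence "m \<notin> \<phi> ` D'" using False by (auto simp: u'_def)
          moreover have "u m = x" using m calculation by (simp add: u'_def)
          ultimately show "m \<in> G - \<phi> ` F" using FD by (auto simp: G_def)
        qed
      next
        show "G - \<phi> ` F \<subseteq> {m. u' m = x}"
        proof
          fix m assume m: "m \<in> G - \<phi> ` F"
          have "m \<notin> \<phi> ` D'"
          proof
            assume "m \<in> \<phi> ` D'"
            then obtain j where j: "j \<in> D'" "m = \<phi> j" by blast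
            hence "r j = x" using ph m by (auto simp: G_def)
            hence "j \<in> F" using j by (auto simp: F_def D'_def)
            thus False using m j by blast
          qed
          thus "m \<in> {m. u' m = x}" using m by (simp add: u'_def G_def)
        qed
      qed
      have cF: "card (\<phi> ` F) = card F" using inj_on_subset[OF inj FD] by (rule card_image)
      have "card {m. u' m = x} = card G - card F"
        unfolding set using card_Diff_subset[OF finite_subset[OF img fG] img] cF by simp
      moreover have "finite {m. u' m = x}" unfolding set using fG by simp
      ultimately have "occ u' x = enat (card G - card F)" by (simp add: occ_def)
      thus ?thesis using False oG oF by simp
    qed
  qed
  have nz: "\<forall>j. u' j \<noteq> 0" using un by (simp add: u'_def)
  define w where "w m = ennreal (arcdist (u m) 1)" for m
  have pt: "ennreal (arcdist (u' m) (v m)) \<le> ennreal (arcdist (u m) (v m)) + (if m \<in> \<phi> ` D' then w m else 0)" for m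
  proof (cases "m \<in> \<phi> ` D'")
    case True
    have "arcdist 1 (v m) \<le> arcdist 1 (u m) + arcdist (u m) (v m)"
      by (rule arcdist_tri) (use un vn in auto)
    hence "ennreal (arcdist 1 (v m)) \<le> ennreal (arcdist (u m) (v m) + arcdist (u m) 1)"
      by (intro ennreal_leI) (simp add: arcdist_sym)
    thus ?thesis using True by (simp add: u'_def w_def ennreal_plus arcdist_nonneg del: ennreal_plus_if)
  next
    case False thus ?thesis by (simp add: u'_def)
  qed
  have "cost u' v \<le> (\<Sum>m. ennreal (arcdist (u m) (v m)) + (if m \<in> \<phi> ` D' then w m else 0))"
    unfolding cost_def by (rule suminf_le_ennreal[OF pt])
  also have "\<dots> = cost u v + (\<Sum>m. if m \<in> \<phi> ` D' then w m else 0)"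
    unfolding cost_def by (rule suminf_add[symmetric]) auto
  also have "(\<Sum>m. if m \<in> \<phi> ` D' then w m else 0) = (\<integral>\<^sup>+j. w (\<phi> j) \<partial>count_space D')"
    by (rule sum_image_indicator[OF inj])
  also have "\<dots> = (\<integral>\<^sup>+j. ennreal (arcdist (r j) 1) \<partial>count_space D')"
    by (rule nn_integral_cong) (simp add: w_def ph)
  also have "\<dots> \<le> (\<integral>\<^sup>+j. ennreal (arcdist (r j) 1) \<partial>count_space D)"
    by (rule nn_integral_count_space_mono_set) (auto simp: D'_def)
  finally have "cost u' v \<le> cost u v + (\<integral>\<^sup>+j. ennreal (arcdist (r j) 1) \<partial>count_space D)"
    by (simp add: add_left_mono)
  thus ?thesis using enum nz by blast
qed

definition Pn :: "(nat \<Rightarrow> complex) \<Rightarrow> nat \<Rightarrow> complex \<Rightarrow> enat" where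
  "Pn s1 N x = enat (card {j. j < N \<and> s1 j = x})"

lemma Pn_0: "Pn s1 0 x = 0"
  by (simp add: Pn_def zero_enat_def)

lemma Pn_Suc: "Pn s1 (Suc N) x = Pn s1 N x + (if s1 N = x then 1 else 0)"
proof (cases "s1 N = x")
  case True
  have "{j. j < Suc N \<and> s1 j = x} = insert N {j. j < N \<and> s1 j = x}" using True by auto
  thus ?thesis using True by (simp add: Pn_def one_enat_def)
next
  case False
  have "{j. j < Suc N \<and> s1 j = x} = {j. j < N \<and> s1 j = x}" using False less_Suc_eq by auto
  thus ?thesis using False by (simp add: Pn_def)
qed

lemma enat_aux1: "enat a + 1 \<le> c \<Longrightarrow> c - enat a \<noteq> 0"
  by (cases c) (auto simp: one_enat_def zero_enat_def)

lemma enat_aux2: "(p::enat) \<noteq> \<infinity> \<Longrightarrow> (c::enat) - p - 1 = c - (p + 1)"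
  by (cases c; cases p) (auto simp: one_enat_def)

lemma Pn_fin: "Pn s1 N x \<noteq> \<infinity>"
  by (simp add: Pn_def)

lemma remove_prefix:
  assumes es: "is_enum S s" and et: "is_enum T t" and S1: "S 1 = \<infinity>" and T1: "T 1 = \<infinity>"
    and sn: "\<forall>j. s j \<noteq> 0" and tn: "\<forall>j. t j \<noteq> 0"
    and PS: "\<forall>N x. x \<noteq> 1 \<longrightarrow> Pn s1 N x \<le> S x" and PT: "\<forall>N x. x \<noteq> 1 \<longrightarrow> Pn t1 N x \<le> T x"
  shows "\<exists>u v. is_enum (\<lambda>x. if x = 1 then \<infinity> else S x - Pn s1 N x) u \<and>
     is_enum (\<lambda>x. if x = 1 then \<infinity> else T x - Pn t1 N x) v \<and> (\<forall>j. u j \<noteq> 0) \<and> (\<forall>j. v j \<noteq> 0) \<and>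
     cost u v \<le> (\<Sum>j<N. ennreal (arcdist (s1 j) (t1 j))) + cost s t"
proof (induction N)
  case 0
  have "(\<lambda>x. if x = 1 then \<infinity> else S x - Pn s1 0 x) = S" using S1 by (auto simp: fun_eq_iff Pn_0)
  moreover have "(\<lambda>x. if x = 1 then \<infinity> else T x - Pn t1 0 x) = T" using T1 by (auto simp: fun_eq_iff Pn_0)
  ultimately show ?case using es et sn tn by auto
next
  case (Suc N)
  define SN where "SN = (\<lambda>x. if x = 1 then \<infinity> else S x - Pn s1 N x)"
  define TN where "TN = (\<lambda>x. if x = 1 then \<infinity> else T x - Pn t1 N x)"
  obtain u v where eu: "is_enum SN u" and ev: "is_enum TN v" and un: "\<forall>j. u j \<noteq> 0" and vn: "\<forall>j. v j \<noteq> 0"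
    and cu: "cost u v \<le> (\<Sum>j<N. ennreal (arcdist (s1 j) (t1 j))) + cost s t"
    using Suc.IH unfolding SN_def TN_def by blast
  define x where "x = s1 N"
  define y where "y = t1 N"
  have SNx: "SN x \<noteq> 0"
  proof (cases "x = 1")
    case True thus ?thesis by (simp add: SN_def)
  next
    case False
    have "Pn s1 N x + 1 \<le> S x" using PS[rule_format, OF False, of "Suc N"] by (simp add: Pn_Suc x_def)
    thus ?thesis using False enat_aux1 by (simp add: SN_def Pn_def)
  qed
  have TNy: "TN y \<noteq> 0"
  proof (cases "y = 1")
    case True thus ?thesis by (simp add: TN_def)
  next
    case False
    have "Pn t1 N y + 1 \<le> T y" using PT[rule_format, OF False, of "Suc N"] by (simp add: Pn_Suc y_def)
    thus ?thesis using False enat_aux1 by (simp add: TN_def Pn_def)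
  qed
  obtain i where ui: "u i = x" using occ_ne0_ex SNx eu unfolding is_enum_def by metis
  obtain k where vk: "v k = y" using occ_ne0_ex TNy ev unfolding is_enum_def by metis
  obtain s' t' where es': "is_enum (SN(x := SN x - 1)) s'" and et': "is_enum (TN(y := TN y - 1)) t'"
    and sn': "\<forall>j. s' j \<noteq> 0" and tn': "\<forall>j. t' j \<noteq> 0" and c': "cost s' t' \<le> cost u v + ennreal (arcdist x y)"
    using remove_pair[OF eu ev _ _ ui vk un vn] by (auto simp: SN_def TN_def)
  have eqS: "SN(x := SN x - 1) = (\<lambda>z. if z = 1 then \<infinity> else S z - Pn s1 (Suc N) z)"
    by (auto simp: fun_eq_iff SN_def Pn_Suc x_def enat_aux2[OF Pn_fin])
  have eqT: "TN(y := TN y - 1) = (\<lambda>z. if z = 1 then \<infinity> else T z - Pn t1 (Suc N) z)"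
    by (auto simp: fun_eq_iff TN_def Pn_Suc y_def enat_aux2[OF Pn_fin])
  have "cost s' t' \<le> (\<Sum>j<Suc N. ennreal (arcdist (s1 j) (t1 j))) + cost s t"
  proof -
    have "cost s' t' \<le> cost u v + ennreal (arcdist x y)" by (rule c')
    also have "\<dots> \<le> (\<Sum>j<N. ennreal (arcdist (s1 j) (t1 j))) + cost s t + ennreal (arcdist x y)"
      by (rule add_right_mono[OF cu])
    also have "\<dots> = (\<Sum>j<Suc N. ennreal (arcdist (s1 j) (t1 j))) + cost s t"
      by (simp add: x_def y_def ac_simps)
    finally show ?thesis .
  qed
  thus ?case using es' et' sn' tn' eqS eqT by metis
qed

lemma Sinf_fin: "S_inf S \<Longrightarrow> x \<noteq> 1 \<Longrightarrow> S x \<noteq> \<infinity>"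
  unfolding S_inf_def by (metis centre_in_ball)

lemma Sinf_one: "S_inf S \<Longrightarrow> S 1 = \<infinity>"
  unfolding S_inf_def by blast

lemma enum_nz:
  assumes "S_inf S" "is_enum S s" shows "s j \<noteq> 0"
proof -
  have "S (s j) \<noteq> 0" using occ_ne0[of s j] assms(2) unfolding is_enum_def by simp
  hence "s j \<in> sphere 0 1" using assms(1) unfolding S_inf_def by blast
  thus ?thesis by auto
qed

lemma rdist_le_cost: "is_enum S s \<Longrightarrow> is_enum T t \<Longrightarrow> rdist S T \<le> cost s t"
  unfolding rdist_def cost_def by (rule INF_lower2[of "(s, t)"]) auto

lemma Inf_add_Inf_ge:
  fixes X :: ennreal
  assumes h: "\<And>a b. a \<in> A \<Longrightarrow> b \<in> B \<Longrightarrow> X \<le> a + b"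
  shows "X \<le> Inf A + Inf B"
proof (rule ennreal_le_epsilon)
  fix e :: real assume e: "0 < e"
  show "X \<le> Inf A + Inf B + ennreal e"
  proof (cases "Inf A = top \<or> Inf B = top")
    case True
    hence "Inf A + Inf B + ennreal e = top" by (elim disjE) (simp_all only: add_top_right_ennreal add_top_left_ennreal)
    thus ?thesis by (metis top_greatest)
  next
    case False
    have e2: "0 < e/2" using e by simp
    have "Inf A < Inf A + ennreal (e/2)" using False e2
      using ennreal_add_left_cancel_less[of "Inf A" 0 "ennreal (e/2)"] by simp
    then obtain a where a: "a \<in> A" "a < Inf A + ennreal (e/2)" by (auto simp: Inf_less_iff)
    have "Inf B < Inf B + ennreal (e/2)" using False e2
      using ennreal_add_left_cancel_less[of "Inf B" 0 "ennreal (e/2)"] by simp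
    then obtain b where b: "b \<in> B" "b < Inf B + ennreal (e/2)" by (auto simp: Inf_less_iff)
    have "X \<le> a + b" by (rule h[OF a(1) b(1)])
    also have "\<dots> \<le> (Inf A + ennreal (e/2)) + (Inf B + ennreal (e/2))"
      using a b by (intro add_mono) auto
    also have "\<dots> = Inf A + Inf B + (ennreal (e/2) + ennreal (e/2))" by (simp add: ac_simps)
    also have "ennreal (e/2) + ennreal (e/2) = ennreal e"
      using e by (simp add: ennreal_plus[symmetric] del: ennreal_plus)
    finally show ?thesis .
  qed
qed

lemma mass_fin:
  assumes S: "S_one S" and es: "is_enum S s"
  shows "(\<Sum>j. ennreal (arcdist (s j) 1)) < \<infinity>"
proof -
  have "rdist S one_rigged < \<infinity>" using S by (simp add: S_one_def)
  then obtain a b where ea: "is_enum S a" and eb: "is_enum one_rigged b"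
    and c: "(\<Sum>j. ennreal (arcdist (a j) (b j))) < \<infinity>"
    unfolding rdist_def by (auto simp: INF_less_iff)
  have b1: "b j = 1" for j
  proof -
    have "one_rigged (b j) \<noteq> 0" using occ_ne0[of b j] eb unfolding is_enum_def by simp
    thus ?thesis by (simp add: one_rigged_def split: if_splits)
  qed
  have "\<forall>x. occD UNIV s x \<le> occ a x" using es ea unfolding is_enum_def occD_UNIV by simp
  then obtain \<phi> where inj: "inj_on \<phi> UNIV" and ph: "\<forall>j\<in>UNIV. a (\<phi> j) = s j"
    using inj_match by blast
  define w where "w m = ennreal (arcdist (a m) 1)" for m
  have "(\<Sum>j. ennreal (arcdist (s j) 1)) = (\<integral>\<^sup>+j. w (\<phi> j) \<partial>count_space UNIV)"
    by (simp add: nn_integral_count_space_nat w_def ph)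
  also have "\<dots> = (\<Sum>m. if m \<in> \<phi> ` UNIV then w m else 0)"
    by (rule sum_image_indicator[OF inj, symmetric])
  also have "\<dots> \<le> (\<Sum>m. w m)" by (rule suminf_le_ennreal) auto
  also have "\<dots> = (\<Sum>j. ennreal (arcdist (a j) (b j)))" by (simp add: w_def b1)
  finally show ?thesis using c by (meson le_less_trans)
qed

lemma tail_small:
  assumes m: "(\<Sum>j. ennreal (arcdist (s j) 1)) < \<infinity>" and e: "0 < e"
  shows "\<exists>N. \<forall>n\<ge>N. (\<integral>\<^sup>+j. ennreal (arcdist (s j) 1) \<partial>count_space {n..}) < ennreal e"
proof -
  define f where "f j = arcdist (s j) 1" for j
  have f0: "0 \<le> f j" for j by (simp add: f_def arcdist_nonneg)
  have sf: "summable f" using summable_suminf_not_top[of f] f0 m by (simp add: f_def)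
  obtain N where N: "\<forall>n\<ge>N. norm (\<Sum>i. f (i + n)) < e" using suminf_exist_split[OF e sf] by blast
  have "(\<integral>\<^sup>+j. ennreal (arcdist (s j) 1) \<partial>count_space {n..}) < ennreal e" if "n \<ge> N" for n
  proof -
    have bij: "bij_betw (\<lambda>i. i + n) UNIV {n..}"
      by (rule bij_betwI[where g="\<lambda>j. j - n"]) auto
    have "(\<integral>\<^sup>+j. ennreal (f j) \<partial>count_space {n..}) = (\<integral>\<^sup>+i. ennreal (f (i + n)) \<partial>count_space UNIV)"
      by (rule nn_integral_bij_count_space[OF bij, symmetric])
    also have "\<dots> = (\<Sum>i. ennreal (f (i + n)))" by (rule nn_integral_count_space_nat)
    also have "\<dots> = ennreal (\<Sum>i. f (i + n))"
      by (rule suminf_ennreal2) (use f0 sf summable_iff_shift[of f n] in auto)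
    also have "\<dots> < ennreal e"
    proof -
      have "(\<Sum>i. f (i + n)) < e" using N that by auto
      thus ?thesis using e by (simp add: ennreal_lessI)
    qed
    finally show ?thesis by (simp add: f_def)
  qed
  thus ?thesis by blast
qed

lemma occ_split:
  assumes "occ s1 x \<noteq> \<infinity>"
  shows "occ s1 x = Pn s1 N x + occD {N..} s1 x"
proof -
  have fin: "finite {j. s1 j = x}" using assms by (simp add: occ_def split: if_splits)
  have eq: "{j. s1 j = x} = {j. j < N \<and> s1 j = x} \<union> {j\<in>{N..}. s1 j = x}" by auto
  have f2: "finite {j\<in>{N..}. s1 j = x}" by (rule finite_subset[OF _ fin]) auto
  have f1: "finite {j. j < N \<and> s1 j = x}" by simp
  have "card {j. s1 j = x} = card {j. j < N \<and> s1 j = x} + card {j\<in>{N..}. s1 j = x}"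
    unfolding eq by (rule card_Un_disjoint[OF f1 f2]) auto
  thus ?thesis using fin f2 by (simp add: occ_def occD_def Pn_def)
qed

lemma enat_aux3: "(a::enat) \<noteq> \<infinity> \<Longrightarrow> a + b \<le> c \<Longrightarrow> b \<le> c - a"
  by (cases a; cases b; cases c) auto

lemma enat_aux4: "(a::enat) \<noteq> \<infinity> \<Longrightarrow> b \<noteq> \<infinity> \<Longrightarrow> c - a - b = c - (a + b)"
  by (cases a; cases b; cases c) auto

lemma enat_aux5: "(c::enat) \<noteq> \<infinity> \<Longrightarrow> c - a \<noteq> \<infinity>"
  by (cases a; cases c) auto

theorem mainTheorem6:
  fixes S1 S T1 T :: rigged
  assumes "S_one S1" and "S_one S" and "S_one T1" and "S_one T"
    and "S1 \<le> S" and "T1 \<le> T"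
  shows "rdist (rdiff S S1) (rdiff T T1) \<le> rdist S1 T1 + rdist S T"
proof -
  note A = assms
  have iS1: "S_inf S1" and iS: "S_inf S" and iT1: "S_inf T1" and iT: "S_inf T"
    using A by (auto simp: S_one_def)
  have key: "rdist (rdiff S S1) (rdiff T T1) \<le> cost s1 t1 + cost s t"
    if es1: "is_enum S1 s1" and et1: "is_enum T1 t1" and es: "is_enum S s" and et: "is_enum T t"
    for s1 t1 s t
  proof (rule ennreal_le_epsilon)
    fix e :: real assume e: "0 < e"
    have e2: "0 < e/2" using e by simp
    obtain N1 where N1: "\<forall>n\<ge>N1. (\<integral>\<^sup>+j. ennreal (arcdist (s1 j) 1) \<partial>count_space {n..}) < ennreal (e/2)"
      using tail_small[OF mass_fin[OF A(1) es1] e2] by blast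
    obtain N2 where N2: "\<forall>n\<ge>N2. (\<integral>\<^sup>+j. ennreal (arcdist (t1 j) 1) \<partial>count_space {n..}) < ennreal (e/2)"
      using tail_small[OF mass_fin[OF A(3) et1] e2] by blast
    define N where "N = max N1 N2"
    define tl1 where "tl1 = (\<integral>\<^sup>+j. ennreal (arcdist (s1 j) 1) \<partial>count_space {N..})"
    define tl2 where "tl2 = (\<integral>\<^sup>+j. ennreal (arcdist (t1 j) 1) \<partial>count_space {N..})"
    have tl1: "tl1 < ennreal (e/2)" using N1 by (simp add: tl1_def N_def)
    have tl2: "tl2 < ennreal (e/2)" using N2 by (simp add: tl2_def N_def)
    have S1o: "S1 x = occ s1 x" for x using es1 by (simp add: is_enum_def)
    have T1o: "T1 x = occ t1 x" for x using et1 by (simp add: is_enum_def)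
    have PS: "\<forall>N x. x \<noteq> 1 \<longrightarrow> Pn s1 N x \<le> S x"
    proof (intro allI impI)
      fix M x assume x: "x \<noteq> (1::complex)"
      have "Pn s1 M x \<le> Pn s1 M x + occD {M..} s1 x" by simp
      also have "\<dots> = S1 x" using occ_split[of s1 x M] Sinf_fin[OF iS1 x] S1o by simp
      also have "\<dots> \<le> S x" using A(5) by (simp add: le_fun_def)
      finally show "Pn s1 M x \<le> S x" .
    qed
    have PT: "\<forall>N x. x \<noteq> 1 \<longrightarrow> Pn t1 N x \<le> T x"
    proof (intro allI impI)
      fix M x assume x: "x \<noteq> (1::complex)"
      have "Pn t1 M x \<le> Pn t1 M x + occD {M..} t1 x" by simp
      also have "\<dots> = T1 x" using occ_split[of t1 x M] Sinf_fin[OF iT1 x] T1o by simp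
      also have "\<dots> \<le> T x" using A(6) by (simp add: le_fun_def)
      finally show "Pn t1 M x \<le> T x" .
    qed
    have sn: "\<forall>j. s j \<noteq> 0" using enum_nz[OF iS es] by blast
    have tn: "\<forall>j. t j \<noteq> 0" using enum_nz[OF iT et] by blast
    define SN where "SN = (\<lambda>x. if x = 1 then \<infinity> else S x - Pn s1 N x)"
    define TN where "TN = (\<lambda>x. if x = 1 then \<infinity> else T x - Pn t1 N x)"
    obtain u v where eu: "is_enum SN u" and ev: "is_enum TN v" and un: "\<forall>j. u j \<noteq> 0" and vn: "\<forall>j. v j \<noteq> 0"
      and cuv: "cost u v \<le> (\<Sum>j<N. ennreal (arcdist (s1 j) (t1 j))) + cost s t"
      using remove_prefix[OF es et Sinf_one[OF iS] Sinf_one[OF iT] sn tn PS PT, of N]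
      unfolding SN_def TN_def by blast
    have SNfin: "\<forall>x. x \<noteq> 1 \<longrightarrow> SN x \<noteq> \<infinity>"
      using Sinf_fin[OF iS] enat_aux5 by (simp add: SN_def)
    have TNfin: "\<forall>x. x \<noteq> 1 \<longrightarrow> TN x \<noteq> \<infinity>"
      using Sinf_fin[OF iT] enat_aux5 by (simp add: TN_def)
    have cntS: "\<forall>x. x \<noteq> 1 \<longrightarrow> occD {N..} s1 x \<le> SN x"
    proof (intro allI impI)
      fix x assume x: "x \<noteq> (1::complex)"
      have o: "S1 x = Pn s1 N x + occD {N..} s1 x"
        using occ_split[of s1 x N] Sinf_fin[OF iS1 x] S1o by simp
      have "S1 x \<le> S x" using A(5) by (simp add: le_fun_def)
      hence "Pn s1 N x + occD {N..} s1 x \<le> S x" using o by simp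
      thus "occD {N..} s1 x \<le> SN x" using x enat_aux3[OF Pn_fin] by (simp add: SN_def)
    qed
    have cntT: "\<forall>x. x \<noteq> 1 \<longrightarrow> occD {N..} t1 x \<le> TN x"
    proof (intro allI impI)
      fix x assume x: "x \<noteq> (1::complex)"
      have o: "T1 x = Pn t1 N x + occD {N..} t1 x"
        using occ_split[of t1 x N] Sinf_fin[OF iT1 x] T1o by simp
      have "T1 x \<le> T x" using A(6) by (simp add: le_fun_def)
      hence "Pn t1 N x + occD {N..} t1 x \<le> T x" using o by simp
      thus "occD {N..} t1 x \<le> TN x" using x enat_aux3[OF Pn_fin] by (simp add: TN_def)
    qed
    obtain u' where eu': "is_enum (\<lambda>x. if x = 1 then \<infinity> else SN x - occD {N..} s1 x) u'"
      and un': "\<forall>j. u' j \<noteq> 0" and cu': "cost u' v \<le> cost u v + tl1"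
      using remove_set[OF eu _ SNfin cntS un vn] unfolding tl1_def by (auto simp: SN_def)
    obtain v' where ev': "is_enum (\<lambda>x. if x = 1 then \<infinity> else TN x - occD {N..} t1 x) v'"
      and cv': "cost v' u' \<le> cost v u' + tl2"
      using remove_set[OF ev _ TNfin cntT vn un'] unfolding tl2_def by (auto simp: TN_def)
    have eqS: "(\<lambda>x. if x = 1 then \<infinity> else SN x - occD {N..} s1 x) = rdiff S S1"
    proof
      fix x show "(if x = 1 then \<infinity> else SN x - occD {N..} s1 x) = rdiff S S1 x"
      proof (cases "x = 1")
        case True thus ?thesis by (simp add: rdiff_def)
      next
        case False
        have fin2: "occD {N..} s1 x \<noteq> \<infinity>"
        proof
          assume "occD {N..} s1 x = \<infinity>"
          hence "occ s1 x = \<infinity>" using occ_split[of s1 x N] by (cases "occ s1 x = \<infinity>") auto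
          thus False using Sinf_fin[OF iS1 False] S1o by simp
        qed
        have "S1 x = Pn s1 N x + occD {N..} s1 x"
          using occ_split[of s1 x N] Sinf_fin[OF iS1 False] S1o by simp
        thus ?thesis using False enat_aux4[OF Pn_fin fin2] by (simp add: SN_def rdiff_def)
      qed
    qed
    have eqT: "(\<lambda>x. if x = 1 then \<infinity> else TN x - occD {N..} t1 x) = rdiff T T1"
    proof
      fix x show "(if x = 1 then \<infinity> else TN x - occD {N..} t1 x) = rdiff T T1 x"
      proof (cases "x = 1")
        case True thus ?thesis by (simp add: rdiff_def)
      next
        case False
        have fin2: "occD {N..} t1 x \<noteq> \<infinity>"
        proof
          assume "occD {N..} t1 x = \<infinity>"
          hence "occ t1 x = \<infinity>" using occ_split[of t1 x N] by (cases "occ t1 x = \<infinity>") auto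
          thus False using Sinf_fin[OF iT1 False] T1o by simp
        qed
        have "T1 x = Pn t1 N x + occD {N..} t1 x"
          using occ_split[of t1 x N] Sinf_fin[OF iT1 False] T1o by simp
        thus ?thesis using False enat_aux4[OF Pn_fin fin2] by (simp add: TN_def rdiff_def)
      qed
    qed
    have "rdist (rdiff S S1) (rdiff T T1) \<le> cost u' v'"
      using rdist_le_cost eu' ev' eqS eqT by metis
    also have "\<dots> = cost v' u'" by (rule cost_sym)
    also have "\<dots> \<le> cost v u' + tl2" by (rule cv')
    also have "cost v u' = cost u' v" by (rule cost_sym)
    also have "cost u' v + tl2 \<le> (cost u v + tl1) + tl2" by (rule add_right_mono[OF cu'])
    also have "\<dots> \<le> ((\<Sum>j<N. ennreal (arcdist (s1 j) (t1 j))) + cost s t + tl1) + tl2"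
      by (intro add_right_mono cuv)
    also have "\<dots> \<le> (cost s1 t1 + cost s t + ennreal (e/2)) + ennreal (e/2)"
    proof -
      have "(\<Sum>j<N. ennreal (arcdist (s1 j) (t1 j))) \<le> cost s1 t1"
        unfolding cost_def by (rule sum_le_suminf) auto
      thus ?thesis using tl1 tl2 by (intro add_mono) auto
    qed
    also have "\<dots> = cost s1 t1 + cost s t + ennreal e"
      using e by (simp add: ennreal_plus[symmetric] ac_simps del: ennreal_plus)
    finally show "rdist (rdiff S S1) (rdiff T T1) \<le> cost s1 t1 + cost s t + ennreal e" .
  qed
  show ?thesis unfolding rdist_def[of S1] rdist_def[of S]
    by (rule Inf_add_Inf_ge) (auto simp: cost_def[symmetric] intro!: key)
qed

end
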